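(* Let $X$ and $Y$ be Tychonoff spaces with $Y$ a $P$-space, and let $f:X\to Y$ be a nearly perfect mapping. Then $f(N(X))=N(Y)$.
   Context: A space $X$ is Menger if for each sequence $(\mathcal{U}_n)$ of open covers of $X$ there is a sequence $(\mathcal{V}_n)$ with each $\mathcal{V}_n$ a finite subset of $\mathcal{U}_n$ and $\bigcup_{n}\bigcup\mathcal{V}_n=X$. $X$ is locally Menger at $x$ if there are an open set $U$ and a Menger subspace $M$ of $X$ with $x\in U\subseteq M$; $N(X)$ denotes the set of points of $X$ at which $X$ is not locally Menger. A $P$-space is a space in which every countable intersection of open sets is open. A mapping $f:X\to Y$ is nearly perfect if it is a closed continuous surjection such that $f^{-1}(y)$ is Menger for every $y\in Y$. *)

theory Defs
  imports "HOL-Analysis.Analysis"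
begin

definition tychonoff_space :: "'a topology \<Rightarrow> bool" where
  "tychonoff_space X \<longleftrightarrow> t1_space X \<and> completely_regular_space X"

definition menger_space :: "'a topology \<Rightarrow> bool" where
  "menger_space X \<longleftrightarrow>
     (\<forall>\<U> :: nat \<Rightarrow> 'a set set.
        (\<forall>n. (\<forall>U\<in>\<U> n. openin X U) \<and> topspace X \<subseteq> \<Union>(\<U> n)) \<longrightarrow>
        (\<exists>\<V> :: nat \<Rightarrow> 'a set set.
           (\<forall>n. finite (\<V> n) \<and> \<V> n \<subseteq> \<U> n) \<and>
           topspace X \<subseteq> (\<Union>n. \<Union>(\<V> n))))"

definition locally_menger_at :: "'a topology \<Rightarrow> 'a \<Rightarrow> bool" where
  "locally_menger_at X x \<longleftrightarrow>
     (\<exists>U M. openin X U \<and> M \<subseteq> topspace X \<and> menger_space (subtopology X M)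
            \<and> x \<in> U \<and> U \<subseteq> M)"

definition not_locally_menger_set :: "'a topology \<Rightarrow> 'a set" where
  "not_locally_menger_set X = {x \<in> topspace X. \<not> locally_menger_at X x}"

definition P_space :: "'a topology \<Rightarrow> bool" where
  "P_space X \<longleftrightarrow>
     (\<forall>\<F>. countable \<F> \<and> \<F> \<noteq> {} \<and> (\<forall>U\<in>\<F>. openin X U) \<longrightarrow> openin X (\<Inter>\<F>))"

definition nearly_perfect_map :: "'a topology \<Rightarrow> 'b topology \<Rightarrow> ('a \<Rightarrow> 'b) \<Rightarrow> bool" where
  "nearly_perfect_map X Y f \<longleftrightarrow>
     continuous_map X Y f \<and> closed_map X Y f \<and> f ` topspace X = topspace Y \<and>
     (\<forall>y\<in>topspace Y. menger_space (subtopology X {x \<in> topspace X. f x = y}))"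

end

theory Submission
  imports Defs "HOL-Library.Nat_Bijection"
begin

definition menger_in :: "'a topology \<Rightarrow> 'a set \<Rightarrow> bool" where
  "menger_in X B \<longleftrightarrow>
     (\<forall>\<U> :: nat \<Rightarrow> 'a set set.
        (\<forall>n. (\<forall>U\<in>\<U> n. openin X U) \<and> B \<subseteq> \<Union>(\<U> n)) \<longrightarrow>
        (\<exists>\<V> :: nat \<Rightarrow> 'a set set.
           (\<forall>n. finite (\<V> n) \<and> \<V> n \<subseteq> \<U> n) \<and> B \<subseteq> (\<Union>n. \<Union>(\<V> n))))"

lemma menger_inD:
  fixes \<U> :: "nat \<Rightarrow> 'a set set"
  assumes "menger_in X B" "\<And>n. \<forall>U\<in>\<U> n. openin X U" "\<And>n. B \<subseteq> \<Union>(\<U> n)"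
  shows "\<exists>\<V>. (\<forall>n. finite (\<V> n) \<and> \<V> n \<subseteq> \<U> n) \<and> B \<subseteq> (\<Union>n. \<Union>(\<V> n))"
proof -
  have "\<forall>n. (\<forall>U\<in>\<U> n. openin X U) \<and> B \<subseteq> \<Union>(\<U> n)" using assms(2,3) by blast
  moreover have "(\<forall>n. (\<forall>U\<in>\<U> n. openin X U) \<and> B \<subseteq> \<Union>(\<U> n)) \<longrightarrow>
      (\<exists>\<V>. (\<forall>n. finite (\<V> n) \<and> \<V> n \<subseteq> \<U> n) \<and> B \<subseteq> (\<Union>n. \<Union>(\<V> n)))"
    using assms(1) unfolding menger_in_def by (rule spec)
  ultimately show ?thesis by (rule rev_mp)
qed

lemma menger_space_subtopology:
  assumes "M \<subseteq> topspace X"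
  shows "menger_space (subtopology X M) \<longleftrightarrow> menger_in X M"
proof
  assume H: "menger_space (subtopology X M)"
  have tsp: "topspace (subtopology X M) = M" using assms by auto
  show "menger_in X M"
    unfolding menger_in_def
  proof (intro allI impI)
    fix \<U> :: "nat \<Rightarrow> 'a set set"
    assume U: "\<forall>n. (\<forall>U\<in>\<U> n. openin X U) \<and> M \<subseteq> \<Union>(\<U> n)"
    define g where "g T = T \<inter> M" for T :: "'a set"
    define \<U>' where "\<U>' n = g ` \<U> n" for n
    have "(\<forall>U\<in>\<U>' n. openin (subtopology X M) U) \<and> topspace (subtopology X M) \<subseteq> \<Union>(\<U>' n)" for n
    proof
      show "\<forall>U\<in>\<U>' n. openin (subtopology X M) U"
        unfolding \<U>'_def g_def using U by (blast intro: openin_subtopology_Int)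
      show "topspace (subtopology X M) \<subseteq> \<Union>(\<U>' n)"
        unfolding tsp \<U>'_def g_def using U by blast
    qed
    then have "\<exists>\<V>. (\<forall>n. finite (\<V> n) \<and> \<V> n \<subseteq> \<U>' n) \<and> topspace (subtopology X M) \<subseteq> (\<Union>n. \<Union>(\<V> n))"
      using H unfolding menger_space_def by blast
    then obtain \<V>' where V': "\<forall>n. finite (\<V>' n) \<and> \<V>' n \<subseteq> \<U>' n"
      and cov: "M \<subseteq> (\<Union>n. \<Union>(\<V>' n))"
      unfolding tsp by blast
    have "\<exists>C. C \<subseteq> \<U> n \<and> finite C \<and> \<V>' n = g ` C" for n
      using V' finite_subset_image[of "\<V>' n" g "\<U> n"] unfolding \<U>'_def by blast
    then have "\<forall>n. \<exists>C. C \<subseteq> \<U> n \<and> finite C \<and> \<V>' n = g ` C" by blast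
    from choice[OF this] obtain C where C: "\<forall>n. C n \<subseteq> \<U> n \<and> finite (C n) \<and> \<V>' n = g ` C n"
      by blast
    show "\<exists>\<V>. (\<forall>n. finite (\<V> n) \<and> \<V> n \<subseteq> \<U> n) \<and> M \<subseteq> (\<Union>n. \<Union>(\<V> n))"
    proof (intro exI[of _ C] conjI)
      show "\<forall>n. finite (C n) \<and> C n \<subseteq> \<U> n" using C by blast
      show "M \<subseteq> (\<Union>n. \<Union>(C n))"
      proof
        fix x assume "x \<in> M"
        then obtain n T where "T \<in> \<V>' n" "x \<in> T" using cov by blast
        then obtain S where "S \<in> C n" "T = g S" using C by blast
        then show "x \<in> (\<Union>n. \<Union>(C n))" using \<open>x \<in> T\<close> unfolding g_def by blast
      qed
    qed
  qed
next
  assume H: "menger_in X M"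
  have tsp: "topspace (subtopology X M) = M" using assms by auto
  show "menger_space (subtopology X M)"
    unfolding menger_space_def tsp
  proof (intro allI impI)
    fix \<U>' :: "nat \<Rightarrow> 'a set set"
    assume U': "\<forall>n. (\<forall>U\<in>\<U>' n. openin (subtopology X M) U) \<and> M \<subseteq> \<Union>(\<U>' n)"
    define \<U> where "\<U> n = {T. openin X T \<and> T \<inter> M \<in> \<U>' n}" for n
    have "\<forall>n. (\<forall>U\<in>\<U> n. openin X U) \<and> M \<subseteq> \<Union>(\<U> n)"
    proof (intro allI conjI)
      fix n
      show "\<forall>U\<in>\<U> n. openin X U" unfolding \<U>_def by blast
      show "M \<subseteq> \<Union>(\<U> n)"
      proof
        fix x assume "x \<in> M"
        then obtain U where U: "U \<in> \<U>' n" "x \<in> U" using U' by blast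
        then have "openin (subtopology X M) U" using U' by blast
        then obtain T where "openin X T" "U = T \<inter> M"
          unfolding openin_subtopology by blast
        then show "x \<in> \<Union>(\<U> n)" unfolding \<U>_def using U by blast
      qed
    qed
    then obtain \<V> where V: "\<forall>n. finite (\<V> n) \<and> \<V> n \<subseteq> \<U> n"
      and cov: "M \<subseteq> (\<Union>n. \<Union>(\<V> n))"
      using menger_inD[OF H, of \<U>] by blast
    show "\<exists>\<V>'. (\<forall>n. finite (\<V>' n) \<and> \<V>' n \<subseteq> \<U>' n) \<and> M \<subseteq> (\<Union>n. \<Union>(\<V>' n))"
    proof (intro exI[of _ "\<lambda>n. (\<lambda>T. T \<inter> M) ` \<V> n"] conjI)
      show "\<forall>n. finite ((\<lambda>T. T \<inter> M) ` \<V> n) \<and> (\<lambda>T. T \<inter> M) ` \<V> n \<subseteq> \<U>' n"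
      proof
        fix n
        have "\<V> n \<subseteq> \<U> n" "finite (\<V> n)" using V by auto
        then show "finite ((\<lambda>T. T \<inter> M) ` \<V> n) \<and> (\<lambda>T. T \<inter> M) ` \<V> n \<subseteq> \<U>' n"
          unfolding \<U>_def by auto
      qed
      show "M \<subseteq> (\<Union>n. \<Union>((\<lambda>T. T \<inter> M) ` \<V> n))" using cov by blast
    qed
  qed
qed

lemma menger_inI:
  assumes "\<And>\<U>::nat \<Rightarrow> 'a set set. (\<And>n. \<forall>U\<in>\<U> n. openin X U) \<Longrightarrow> (\<And>n. B \<subseteq> \<Union>(\<U> n)) \<Longrightarrow>
     \<exists>\<V>. (\<forall>n. finite (\<V> n) \<and> \<V> n \<subseteq> \<U> n) \<and> B \<subseteq> (\<Union>n. \<Union>(\<V> n))"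
  shows "menger_in X B"
  unfolding menger_in_def
proof (intro allI impI)
  fix \<U> :: "nat \<Rightarrow> 'a set set"
  assume h: "\<forall>n. (\<forall>U\<in>\<U> n. openin X U) \<and> B \<subseteq> \<Union>(\<U> n)"
  show "\<exists>\<V>. (\<forall>n. finite (\<V> n) \<and> \<V> n \<subseteq> \<U> n) \<and> B \<subseteq> (\<Union>n. \<Union>(\<V> n))"
    by (rule assms) (use h in blast)+
qed

lemma choice_finite_preimage:
  assumes "\<forall>n. finite (V n) \<and> V n \<subseteq> g ` U n"
  shows "\<exists>C. \<forall>n. C n \<subseteq> U n \<and> finite (C n) \<and> V n = g ` C n"
proof -
  have "\<exists>C. C \<subseteq> U n \<and> finite C \<and> V n = g ` C" for n
    using assms finite_subset_image[of "V n" g "U n"] by blast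
  then have "\<forall>n. \<exists>C. C \<subseteq> U n \<and> finite C \<and> V n = g ` C" by blast
  from choice[OF this] show ?thesis by blast
qed

lemma menger_in_Union:
  fixes X :: "'a topology" and B :: "nat \<Rightarrow> 'a set"
  assumes "\<forall>k. menger_in X (B k)"
  shows "menger_in X (\<Union>k. B k)"
proof (rule menger_inI)
  fix \<U> :: "nat \<Rightarrow> 'a set set"
  assume U1: "\<And>n. \<forall>U\<in>\<U> n. openin X U" and U2: "\<And>n. (\<Union>k. B k) \<subseteq> \<Union>(\<U> n)"
  have "\<exists>V. (\<forall>m. finite (V m) \<and> V m \<subseteq> \<U> (prod_encode (k,m))) \<and> B k \<subseteq> (\<Union>m. \<Union>(V m))" for k
  proof (rule menger_inD)
    show "menger_in X (B k)" using assms by blast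
    show "\<forall>U\<in>\<U> (prod_encode (k,m)). openin X U" for m using U1 by blast
    show "B k \<subseteq> \<Union>(\<U> (prod_encode (k,m)))" for m using U2 by blast
  qed
  then have "\<forall>k. \<exists>V. (\<forall>m. finite (V m) \<and> V m \<subseteq> \<U> (prod_encode (k,m))) \<and> B k \<subseteq> (\<Union>m. \<Union>(V m))"
    by blast
  from choice[OF this] obtain Vf where Vf: "\<forall>k. (\<forall>m. finite (Vf k m) \<and> Vf k m \<subseteq> \<U> (prod_encode (k,m))) \<and> B k \<subseteq> (\<Union>m. \<Union>(Vf k m))"
    by blast
  define V where "V n = (case prod_decode n of (k,m) \<Rightarrow> Vf k m)" for n
  have VV: "V (prod_encode (k,m)) = Vf k m" for k m unfolding V_def by simp
  show "\<exists>\<V>. (\<forall>n. finite (\<V> n) \<and> \<V> n \<subseteq> \<U> n) \<and> (\<Union>k. B k) \<subseteq> (\<Union>n. \<Union>(\<V> n))"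
  proof (intro exI[of _ V] conjI allI)
    fix n
    obtain k m where km: "prod_decode n = (k,m)" by (cases "prod_decode n")
    have n: "n = prod_encode (k,m)" using km by (metis prod_decode_inverse)
    show "finite (V n)" "V n \<subseteq> \<U> n" using Vf unfolding n VV by auto
  next
    show "(\<Union>k. B k) \<subseteq> (\<Union>n. \<Union>(V n))"
    proof
      fix x assume "x \<in> (\<Union>k. B k)"
      then obtain k where "x \<in> B k" by blast
      then obtain m where "x \<in> \<Union>(Vf k m)" using Vf by blast
      then have "x \<in> \<Union>(V (prod_encode (k,m)))" unfolding VV .
      then show "x \<in> (\<Union>n. \<Union>(V n))" by blast
    qed
  qed
qed

lemma menger_in_image:
  fixes X :: "'a topology" and Y :: "'b topology"
  assumes "menger_in X B" "continuous_map X Y f" "B \<subseteq> topspace X"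
  shows "menger_in Y (f ` B)"
proof (rule menger_inI)
  fix \<U> :: "nat \<Rightarrow> 'b set set"
  assume U1: "\<And>n. \<forall>U\<in>\<U> n. openin Y U" and U2: "\<And>n. f ` B \<subseteq> \<Union>(\<U> n)"
  define pre where "pre U = {x \<in> topspace X. f x \<in> U}" for U
  have "\<exists>\<V>'. (\<forall>n. finite (\<V>' n) \<and> \<V>' n \<subseteq> pre ` \<U> n) \<and> B \<subseteq> (\<Union>n. \<Union>(\<V>' n))"
  proof (rule menger_inD[OF assms(1)])
    show "\<forall>U\<in>pre ` \<U> n. openin X U" for n
      using U1 assms(2) unfolding pre_def by (blast intro: openin_continuous_map_preimage)
    show "B \<subseteq> \<Union>(pre ` \<U> n)" for n
    proof
      fix x assume "x \<in> B"
      then obtain U where "U \<in> \<U> n" "f x \<in> U" using U2 by blast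
      then show "x \<in> \<Union>(pre ` \<U> n)" using \<open>x \<in> B\<close> assms(3) unfolding pre_def by blast
    qed
  qed
  then obtain \<V>' where V': "\<forall>n. finite (\<V>' n) \<and> \<V>' n \<subseteq> pre ` \<U> n"
      and cov: "B \<subseteq> (\<Union>n. \<Union>(\<V>' n))" by blast
  obtain C where C: "\<forall>n. C n \<subseteq> \<U> n \<and> finite (C n) \<and> \<V>' n = pre ` C n"
    using choice_finite_preimage[OF V'] by blast
  show "\<exists>\<V>. (\<forall>n. finite (\<V> n) \<and> \<V> n \<subseteq> \<U> n) \<and> f ` B \<subseteq> (\<Union>n. \<Union>(\<V> n))"
  proof (intro exI[of _ C] conjI)
    show "\<forall>n. finite (C n) \<and> C n \<subseteq> \<U> n" using C by blast
    show "f ` B \<subseteq> (\<Union>n. \<Union>(C n))"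
    proof
      fix y assume "y \<in> f ` B"
      then obtain x where x: "x \<in> B" "y = f x" by blast
      then obtain n T where "T \<in> \<V>' n" "x \<in> T" using cov by blast
      then obtain U where "U \<in> C n" "T = pre U" using C by blast
      then show "y \<in> (\<Union>n. \<Union>(C n))" using \<open>x \<in> T\<close> x unfolding pre_def by blast
    qed
  qed
qed

lemma menger_in_lindelof:
  fixes X :: "'a topology"
  assumes "menger_in X B" "B \<noteq> {}" "\<forall>x\<in>B. openin X (Op x) \<and> x \<in> Op x"
  shows "\<exists>s::nat \<Rightarrow> 'a. (\<forall>k. s k \<in> B) \<and> B \<subseteq> (\<Union>k. Op (s k))"
proof -
  have "\<exists>V. (\<forall>n. finite (V n) \<and> V n \<subseteq> (\<lambda>n::nat. Op ` B) n) \<and> B \<subseteq> (\<Union>n. \<Union>(V n))"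
  proof (rule menger_inD[OF assms(1)])
    show "\<forall>U\<in>(\<lambda>n::nat. Op ` B) n. openin X U" for n using assms(3) by blast
    show "B \<subseteq> \<Union>((\<lambda>n::nat. Op ` B) n)" for n using assms(3) by blast
  qed
  then obtain V :: "nat \<Rightarrow> 'a set set" where V: "\<forall>n. finite (V n) \<and> V n \<subseteq> Op ` B"
      and cov: "B \<subseteq> (\<Union>n. \<Union>(V n))"
    by auto
  obtain C where C: "\<forall>n. C n \<subseteq> B \<and> finite (C n) \<and> V n = Op ` C n"
    using choice_finite_preimage[of V Op "\<lambda>n. B"] V by blast
  define D where "D = (\<Union>n. C n)"
  have Dc: "countable D" unfolding D_def using C by (simp add: countable_finite)
  have DB: "D \<subseteq> B" unfolding D_def using C by blast
  have covD: "B \<subseteq> (\<Union>x\<in>D. Op x)"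
  proof
    fix x assume "x \<in> B"
    then obtain n T where "T \<in> V n" "x \<in> T" using cov by blast
    then obtain z where "z \<in> C n" "T = Op z" using C by blast
    then show "x \<in> (\<Union>x\<in>D. Op x)" using \<open>x \<in> T\<close> unfolding D_def by blast
  qed
  have Dne: "D \<noteq> {}" using covD assms(2) by blast
  have rng: "range (from_nat_into D) = D" using range_from_nat_into[OF Dne Dc] .
  show ?thesis
  proof (intro exI[of _ "from_nat_into D"] conjI allI)
    show "from_nat_into D k \<in> B" for k using from_nat_into[OF Dne] DB by blast
    show "B \<subseteq> (\<Union>k. Op (from_nat_into D k))"
    proof
      fix x assume "x \<in> B"
      then obtain d where d: "d \<in> D" "x \<in> Op d" using covD by blast
      then obtain k where "d = from_nat_into D k" using rng by (metis rangeE)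
      then show "x \<in> (\<Union>k. Op (from_nat_into D k))" using d by blast
    qed
  qed
qed

lemma menger_preimage:
  fixes X :: "'a topology" and Y :: "'b topology"
  assumes cont: "continuous_map X Y f" and cl: "closed_map X Y f" and P: "P_space Y"
    and fib: "\<forall>y\<in>topspace Y. menger_in X {x\<in>topspace X. f x = y}"
    and MY: "M \<subseteq> topspace Y" and MM: "menger_in Y M"
  shows "menger_in X {x\<in>topspace X. f x \<in> M}"
proof (cases "M = {}")
  case True
  show ?thesis
  proof (rule menger_inI)
    fix \<U> :: "nat \<Rightarrow> 'a set set"
    show "\<exists>\<V>. (\<forall>n. finite (\<V> n) \<and> \<V> n \<subseteq> \<U> n) \<and> {x\<in>topspace X. f x \<in> M} \<subseteq> (\<Union>n. \<Union>(\<V> n))"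
      by (rule exI[of _ "\<lambda>n. {}"]) (simp add: True)
  qed
next
  case False
  show ?thesis
  proof (rule menger_inI)
    fix \<U> :: "nat \<Rightarrow> 'a set set"
    assume U1: "\<And>n. \<forall>U\<in>\<U> n. openin X U" and U2: "\<And>n. {x\<in>topspace X. f x \<in> M} \<subseteq> \<Union>(\<U> n)"
    have ex: "\<exists>V. (\<forall>m. finite (V m) \<and> V m \<subseteq> \<U> (prod_encode (j,m))) \<and> {x\<in>topspace X. f x = y} \<subseteq> (\<Union>m. \<Union>(V m))"
      if "y \<in> M" for y j
    proof (rule menger_inD)
      show "menger_in X {x\<in>topspace X. f x = y}" using fib MY that by blast
      show "\<forall>U\<in>\<U> (prod_encode (j,m)). openin X U" for m using U1 by blast
      show "{x\<in>topspace X. f x = y} \<subseteq> \<Union>(\<U> (prod_encode (j,m)))" for m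
      proof
        fix x assume "x \<in> {x\<in>topspace X. f x = y}"
        then have "x \<in> {x\<in>topspace X. f x \<in> M}" using that by simp
        then show "x \<in> \<Union>(\<U> (prod_encode (j,m)))" using U2 by blast
      qed
    qed
    define Vf where "Vf y j = (SOME V. (\<forall>m. finite (V m) \<and> V m \<subseteq> \<U> (prod_encode (j,m))) \<and> {x\<in>topspace X. f x = y} \<subseteq> (\<Union>m. \<Union>(V m)))" for y j
    have Vf: "(\<forall>m. finite (Vf y j m) \<and> Vf y j m \<subseteq> \<U> (prod_encode (j,m))) \<and> {x\<in>topspace X. f x = y} \<subseteq> (\<Union>m. \<Union>(Vf y j m))"
      if "y \<in> M" for y j
      unfolding Vf_def by (rule someI_ex[OF ex[OF that]])
    define W where "W y j = (\<Union>m. \<Union>(Vf y j m))" for y j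
    define Oj where "Oj y j = topspace Y - f ` (topspace X - W y j)" for y j
    define Obig where "Obig y = \<Inter>(range (Oj y))" for y
    have Wopen: "openin X (W y j)" if "y \<in> M" for y j
    proof -
      have eq: "W y j = \<Union>(\<Union>m. Vf y j m)" unfolding W_def by blast
      have "\<forall>T\<in>(\<Union>m. Vf y j m). openin X T" using Vf[OF that, of j] U1 by blast
      then show ?thesis unfolding eq by (intro openin_Union) auto
    qed
    have Oopen: "openin Y (Oj y j)" if "y \<in> M" for y j
    proof -
      have "closedin X (topspace X - W y j)" by (rule closedin_diff[OF closedin_topspace Wopen[OF that]])
      then have "closedin Y (f ` (topspace X - W y j))" using cl unfolding closed_map_def by simp
      then show ?thesis unfolding Oj_def by (rule openin_diff[OF openin_topspace])
    qed
    have Obigopen: "openin Y (Obig y)" if "y \<in> M" for y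
    proof -
      have "countable (range (Oj y)) \<and> range (Oj y) \<noteq> {} \<and> (\<forall>U\<in>range (Oj y). openin Y U)"
        using Oopen[OF that] by auto
      moreover have "countable (range (Oj y)) \<and> range (Oj y) \<noteq> {} \<and> (\<forall>U\<in>range (Oj y). openin Y U) \<longrightarrow> openin Y (\<Inter>(range (Oj y)))"
        using P unfolding P_space_def by (rule spec)
      ultimately show ?thesis unfolding Obig_def by (rule rev_mp)
    qed
    have yObig: "y \<in> Obig y" if "y \<in> M" for y
    proof -
      have "y \<in> Oj y j" for j
      proof -
        have "y \<notin> f ` (topspace X - W y j)"
        proof
          assume "y \<in> f ` (topspace X - W y j)"
          then obtain x where x: "x \<in> topspace X" "x \<notin> W y j" "y = f x" by blast
          then have "x \<in> {x\<in>topspace X. f x = y}" by simp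
          then have "x \<in> W y j" using Vf[OF that, of j] unfolding W_def by blast
          then show False using x by blast
        qed
        then show ?thesis unfolding Oj_def using that MY by blast
      qed
      then show ?thesis unfolding Obig_def by blast
    qed
    have "\<forall>y\<in>M. openin Y (Obig y) \<and> y \<in> Obig y" using Obigopen yObig by blast
    from menger_in_lindelof[OF MM False this]
    obtain s :: "nat \<Rightarrow> 'b" where s1: "\<forall>k. s k \<in> M" and s2: "M \<subseteq> (\<Union>k. Obig (s k))"
      by blast
    define V where "V n = (case prod_decode n of (k,m) \<Rightarrow> Vf (s k) k m)" for n
    have VV: "V (prod_encode (k,m)) = Vf (s k) k m" for k m unfolding V_def by simp
    show "\<exists>\<V>. (\<forall>n. finite (\<V> n) \<and> \<V> n \<subseteq> \<U> n) \<and> {x\<in>topspace X. f x \<in> M} \<subseteq> (\<Union>n. \<Union>(\<V> n))"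
    proof (intro exI[of _ V] conjI allI)
      fix n
      obtain k m where km: "prod_decode n = (k,m)" by (cases "prod_decode n")
      have n: "n = prod_encode (k,m)" using km by (metis prod_decode_inverse)
      have "finite (Vf (s k) k m) \<and> Vf (s k) k m \<subseteq> \<U> (prod_encode (k,m))"
        using Vf[OF spec[OF s1, of k], of k] by blast
      then show "finite (V n)" "V n \<subseteq> \<U> n" unfolding n VV by auto
    next
      show "{x\<in>topspace X. f x \<in> M} \<subseteq> (\<Union>n. \<Union>(V n))"
      proof
        fix x assume x: "x \<in> {x\<in>topspace X. f x \<in> M}"
        then obtain k where "f x \<in> Obig (s k)" using s2 by blast
        then have "f x \<in> Oj (s k) k" unfolding Obig_def by blast
        then have "x \<in> W (s k) k" unfolding Oj_def using x by blast
        then obtain m where "x \<in> \<Union>(Vf (s k) k m)" unfolding W_def by blast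
        then have "x \<in> \<Union>(V (prod_encode (k,m)))" unfolding VV .
        then show "x \<in> (\<Union>n. \<Union>(V n))" by blast
      qed
    qed
  qed
qed

theorem theorem5p15:
  fixes X :: "'a topology" and Y :: "'b topology" and f :: "'a \<Rightarrow> 'b"
  assumes "tychonoff_space X" and "tychonoff_space Y" and "P_space Y"
    and "nearly_perfect_map X Y f"
  shows "f ` not_locally_menger_set X = not_locally_menger_set Y"
proof -
  have cont: "continuous_map X Y f" and cl: "closed_map X Y f"
    and sur: "f ` topspace X = topspace Y"
    and fibs: "\<forall>y\<in>topspace Y. menger_space (subtopology X {x \<in> topspace X. f x = y})"
    using assms(4) unfolding nearly_perfect_map_def by blast+
  have fib: "\<forall>y\<in>topspace Y. menger_in X {x \<in> topspace X. f x = y}"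
  proof
    fix y assume "y \<in> topspace Y"
    then have "menger_space (subtopology X {x \<in> topspace X. f x = y})" using fibs by blast
    then show "menger_in X {x \<in> topspace X. f x = y}"
      using menger_space_subtopology[of "{x \<in> topspace X. f x = y}" X] by blast
  qed
  show ?thesis
  proof
    show "f ` not_locally_menger_set X \<subseteq> not_locally_menger_set Y"
    proof
      fix y assume "y \<in> f ` not_locally_menger_set X"
      then obtain x where x: "x \<in> topspace X" "\<not> locally_menger_at X x" "y = f x"
        unfolding not_locally_menger_set_def by blast
      have yY: "y \<in> topspace Y" using x(1,3) continuous_map_image_subset_topspace[OF cont] by blast
      have "\<not> locally_menger_at Y y"
      proof
        assume "locally_menger_at Y y"
        then obtain U M where UM: "openin Y U" "M \<subseteq> topspace Y" "menger_space (subtopology Y M)"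
          "y \<in> U" "U \<subseteq> M" unfolding locally_menger_at_def by blast
        have MM: "menger_in Y M" using UM(3) menger_space_subtopology[OF UM(2)] by simp
        have PM: "menger_in X {x\<in>topspace X. f x \<in> M}"
          by (rule menger_preimage[OF cont cl assms(3) fib UM(2) MM])
        have PM': "menger_space (subtopology X {x\<in>topspace X. f x \<in> M})"
          using PM menger_space_subtopology[of "{x\<in>topspace X. f x \<in> M}" X] by simp
        have "locally_menger_at X x"
          unfolding locally_menger_at_def
        proof (intro exI conjI)
          show "openin X {x\<in>topspace X. f x \<in> U}"
            using openin_continuous_map_preimage[OF cont UM(1)] .
          show "{x\<in>topspace X. f x \<in> M} \<subseteq> topspace X" by blast
          show "menger_space (subtopology X {x\<in>topspace X. f x \<in> M})" by (rule PM')
          show "x \<in> {x\<in>topspace X. f x \<in> U}" using x UM(4) by blast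
          show "{x\<in>topspace X. f x \<in> U} \<subseteq> {x\<in>topspace X. f x \<in> M}" using UM(5) by blast
        qed
        then show False using x by blast
      qed
      then show "y \<in> not_locally_menger_set Y" unfolding not_locally_menger_set_def using yY by blast
    qed
  next
    show "not_locally_menger_set Y \<subseteq> f ` not_locally_menger_set X"
    proof
      fix y assume "y \<in> not_locally_menger_set Y"
      then have yY: "y \<in> topspace Y" and nl: "\<not> locally_menger_at Y y"
        unfolding not_locally_menger_set_def by blast+
      show "y \<in> f ` not_locally_menger_set X"
      proof (rule ccontr)
        assume nin: "y \<notin> f ` not_locally_menger_set X"
        define F where "F = {x \<in> topspace X. f x = y}"
        have lmF: "locally_menger_at X x" if "x \<in> F" for x
        proof (rule ccontr)
          assume "\<not> locally_menger_at X x"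
          then have "x \<in> not_locally_menger_set X" using that
            unfolding F_def not_locally_menger_set_def by blast
          then have "y \<in> f ` not_locally_menger_set X" using that unfolding F_def by force
          then show False using nin by blast
        qed
        have "\<forall>x\<in>F. \<exists>p. openin X (fst p) \<and> snd p \<subseteq> topspace X \<and> menger_space (subtopology X (snd p))
              \<and> x \<in> fst p \<and> fst p \<subseteq> snd p"
        proof
          fix x assume "x \<in> F"
          then obtain U M where "openin X U \<and> M \<subseteq> topspace X \<and> menger_space (subtopology X M)
            \<and> x \<in> U \<and> U \<subseteq> M" using lmF unfolding locally_menger_at_def by blast
          then show "\<exists>p. openin X (fst p) \<and> snd p \<subseteq> topspace X \<and> menger_space (subtopology X (snd p))
              \<and> x \<in> fst p \<and> fst p \<subseteq> snd p" by (intro exI[of _ "(U,M)"]) simp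
        qed
        from bchoice[OF this] obtain g where g: "\<forall>x\<in>F. openin X (fst (g x)) \<and> snd (g x) \<subseteq> topspace X
              \<and> menger_space (subtopology X (snd (g x))) \<and> x \<in> fst (g x) \<and> fst (g x) \<subseteq> snd (g x)"
          by blast
        define Uf where "Uf x = fst (g x)" for x
        define Mf where "Mf x = snd (g x)" for x
        have g': "openin X (Uf x)" "Mf x \<subseteq> topspace X" "menger_in X (Mf x)" "x \<in> Uf x" "Uf x \<subseteq> Mf x"
          if "x \<in> F" for x
        proof -
          show "openin X (Uf x)" "Mf x \<subseteq> topspace X" "x \<in> Uf x" "Uf x \<subseteq> Mf x"
            using g that unfolding Uf_def Mf_def by blast+
          have "menger_space (subtopology X (Mf x))" using g that unfolding Mf_def by blast
          then show "menger_in X (Mf x)" using menger_space_subtopology[of "Mf x" X] \<open>Mf x \<subseteq> topspace X\<close>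
            by blast
        qed
        have "y \<in> f ` topspace X" using yY sur by simp
        then obtain x0 where "x0 \<in> topspace X" "y = f x0" by blast
        then have "x0 \<in> F" unfolding F_def by simp
        then have Fne: "F \<noteq> {}" by blast
        have FM: "menger_in X F" using fib yY unfolding F_def by simp
        have "\<forall>x\<in>F. openin X (Uf x) \<and> x \<in> Uf x" using g'(1,4) by simp
        from menger_in_lindelof[OF FM Fne this]
        obtain s :: "nat \<Rightarrow> 'a" where s1: "\<forall>k. s k \<in> F" and s2: "F \<subseteq> (\<Union>k. Uf (s k))" by blast
        define W where "W = (\<Union>k. Uf (s k))"
        have Wopen: "openin X W" unfolding W_def
        proof (rule openin_Union)
          fix S assume "S \<in> range (\<lambda>k. Uf (s k))"
          then show "openin X S" using g'(1) s1 by blast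
        qed
        define Onb where "Onb = topspace Y - f ` (topspace X - W)"
        have Oopen: "openin Y Onb"
        proof -
          have "closedin X (topspace X - W)" by (rule closedin_diff[OF closedin_topspace Wopen])
          then have "closedin Y (f ` (topspace X - W))" using cl unfolding closed_map_def by simp
          then show ?thesis unfolding Onb_def by (rule openin_diff[OF openin_topspace])
        qed
        have yO: "y \<in> Onb"
        proof -
          have "y \<notin> f ` (topspace X - W)"
          proof
            assume "y \<in> f ` (topspace X - W)"
            then obtain x where x: "x \<in> topspace X" "x \<notin> W" "y = f x" by blast
            then have "x \<in> F" unfolding F_def by simp
            then show False using s2 x unfolding W_def by blast
          qed
          then show ?thesis unfolding Onb_def using yY by blast
        qed
        define Mall where "Mall = (\<Union>k. Mf (s k))"
        have MallM: "menger_in X Mall" unfolding Mall_def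
          by (rule menger_in_Union) (use g'(3) s1 in simp)
        have MallX: "Mall \<subseteq> topspace X" unfolding Mall_def using g'(2) s1 by (simp add: UN_subset_iff)
        have M'M: "menger_in Y (f ` Mall)" by (rule menger_in_image[OF MallM cont MallX])
        have M'Y: "f ` Mall \<subseteq> topspace Y" using MallX continuous_map_image_subset_topspace[OF cont] by blast
        have OM: "Onb \<subseteq> f ` Mall"
        proof
          fix z assume z: "z \<in> Onb"
          then have "z \<in> topspace Y" unfolding Onb_def by blast
          then obtain x where x: "x \<in> topspace X" "z = f x" using sur by blast
          then have "x \<in> W" using z unfolding Onb_def by blast
          then obtain k where "x \<in> Uf (s k)" unfolding W_def by blast
          then have "x \<in> Mf (s k)" using g'(5) s1 by blast
          then show "z \<in> f ` Mall" using x unfolding Mall_def by blast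
        qed
        have "locally_menger_at Y y"
          unfolding locally_menger_at_def
        proof (intro exI conjI)
          show "openin Y Onb" by (rule Oopen)
          show "f ` Mall \<subseteq> topspace Y" by (rule M'Y)
          show "menger_space (subtopology Y (f ` Mall))"
            using M'M menger_space_subtopology[OF M'Y] by simp
          show "y \<in> Onb" by (rule yO)
          show "Onb \<subseteq> f ` Mall" by (rule OM)
        qed
        then show False using nl by blast
      qed
    qed
  qed
qed

end
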